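(* Let $\mathcal{X}$ and $\mathcal{Y}$ be finite sets, let $n\ge 1$ and $k\ge 0$ be integers, and let $P_{\mathbf{y}|\mathbf{x}}$ be a channel from $\mathcal{X}^n$ to $\mathcal{Y}^n$. Let $P_{\mathbf{x}}$ be an arbitrary probability distribution on $\mathcal{X}^n$ and let $\Delta\in\mathbb{N}_0=\{0,1,2,\dots\}$. Then there exists an $(n,k,\epsilon_{\mathsf T},\epsilon_{\mathsf U})$-code for $P_{\mathbf{y}|\mathbf{x}}$ satisfying simultaneously $$\epsilon_{\mathsf T}\le \mathrm{RCU}(k+\Delta,n)\qquad\text{and}\qquad \epsilon_{\mathsf U}\le \mathrm{RCU}(k+\Delta,n)\,2^{-\Delta},$$ where, for an integer $j\ge 0$, $$\mathrm{RCU}(j,n)=\mathbb{E}\Big[\min\Big\{1,\,(2^{j}-1)\,\Pr\big[P_{\mathbf{y}|\mathbf{x}}(\mathbf{y}|\bar{\mathbf{x}})\ge P_{\mathbf{y}|\mathbf{x}}(\mathbf{y}|\mathbf{x})\,\big|\,\mathbf{x},\mathbf{y}\big]\Big\}\Big],$$ with $(\mathbf{x},\mathbf{y},\bar{\mathbf{x}})$ jointly distributed as $P_{\mathbf{x},\mathbf{y},\bar{\mathbf{x}}}(\mathbf{x},\mathbf{y},\bar{\mathbf{x}})=P_{\mathbf{x}}(\mathbf{x})\,P_{\mathbf{y}|\mathbf{x}}(\mathbf{y}|\mathbf{x})\,P_{\mathbf{x}}(\bar{\mathbf{x}})$ (the outer expectation is over $(\mathbf{x},\mathbf{y})$).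
   Context: A channel from $\mathcal{X}^n$ to $\mathcal{Y}^n$ is a conditional probability mass function $P_{\mathbf{y}|\mathbf{x}}(\mathbf{y}|\mathbf{x})$, $\mathbf{x}\in\mathcal{X}^n$, $\mathbf{y}\in\mathcal{Y}^n$. (The paper notes the same statement applies to continuous alphabets with conditional densities in place of pmfs.) Definition ($(n,k,\epsilon_{\mathsf T},\epsilon_{\mathsf U})$-code). An $(n,k,\epsilon_{\mathsf T},\epsilon_{\mathsf U})$-code for the channel $P_{\mathbf{y}|\mathbf{x}}$ consists of: (i) a discrete random variable $u$ with distribution $P_u$ on a set $\mathcal{U}$ with $|\mathcal{U}|\le 2$, known to both transmitter and receiver (common randomness); (ii) an encoder $\phi:\mathcal{U}\times\{1,\dots,2^k\}\to\mathcal{X}^n$; (iii) an erasure decoder $g:\mathcal{U}\times\mathcal{Y}^n\to\{0,1,\dots,2^k\}$, where output $0$ denotes an erasure. For each $u$ and $\hat w\in\{0,1,\dots,2^k\}$ let $\mathcal{D}_{u,\hat w}=\{\mathbf{y}: g(u,\mathbf{y})=\hat w\}$ (these partition $\mathcal{Y}^n$). The message $w$ is uniform on $\{1,\dots,2^k\}$ and independent of $u$, and given $u$ and $w=m$ the output $\mathbf{y}$ has law $P_{\mathbf{y}|\mathbf{x}}(\cdot\,|\,\phi(u,m))$. It is required that the total error probability and undetected error probability satisfy $$\frac{1}{2^k}\sum_{m=1}^{2^k}\sum_{\substack{m'=0\\ m'\ne m}}^{2^k}\Pr[\mathbf{y}\in\mathcal{D}_{u,m'}\mid w=m]\le\epsilon_{\mathsf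 T},\qquad \frac{1}{2^k}\sum_{m=1}^{2^k}\sum_{\substack{m'=1\\ m'\ne m}}^{2^k}\Pr[\mathbf{y}\in\mathcal{D}_{u,m'}\mid w=m]\le\epsilon_{\mathsf U},$$ where probabilities are over the pair $(u,\mathbf{y})$. *)

theory Defs
  imports Main "HOL-Library.FuncSet" Complex_Main
begin

definition words :: "nat \<Rightarrow> 'a list set" where
  "words n = {xs. length xs = n}"

definition pmf_on :: "'a set \<Rightarrow> ('a \<Rightarrow> real) \<Rightarrow> bool" where
  "pmf_on A P \<longleftrightarrow> (\<forall>a\<in>A. 0 \<le> P a) \<and> sum P A = 1"

text \<open>A channel from \<X>^n to \<Y>^n: W x y = P(y|x).\<close>
definition channel :: "nat \<Rightarrow> ('x list \<Rightarrow> 'y list \<Rightarrow> real) \<Rightarrow> bool" where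
  "channel n W \<longleftrightarrow> (\<forall>x\<in>words n. pmf_on (words n) (W x))"

definition RCU :: "nat \<Rightarrow> ('x list \<Rightarrow> 'y list \<Rightarrow> real) \<Rightarrow> ('x list \<Rightarrow> real) \<Rightarrow> nat \<Rightarrow> real" where
  "RCU n W Px j =
     (\<Sum>x\<in>words n. \<Sum>y\<in>words n. Px x * W x y *
        min 1 ((2 ^ j - 1) * (\<Sum>xb\<in>{xb\<in>words n. W xb y \<ge> W x y}. Px xb)))"

text \<open>The common randomness u takes values in a set of size \<le> 2,
  modelled as bool with a pmf pu (a one-element U corresponds to pu putting all mass
  on one point). Messages are 1..2^k, decoder output 0 means erasure.
  Pr[y \<in> D_{u,m'} | w = m] = \<Sum>_u pu u * \<Sum>_{y, g u y = m'} W (enc u m) y.\<close>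
definition is_code :: "nat \<Rightarrow> nat \<Rightarrow> ('x list \<Rightarrow> 'y list \<Rightarrow> real) \<Rightarrow> real \<Rightarrow> real \<Rightarrow> bool" where
  "is_code n k W eT eU \<longleftrightarrow>
     (\<exists>(pu :: bool \<Rightarrow> real) (enc :: bool \<Rightarrow> nat \<Rightarrow> 'x list) (dec :: bool \<Rightarrow> 'y list \<Rightarrow> nat).
        pmf_on UNIV pu \<and>
        (\<forall>u m. m \<in> {1..2^k} \<longrightarrow> enc u m \<in> words n) \<and>
        (\<forall>u y. y \<in> words n \<longrightarrow> dec u y \<in> {0..2^k}) \<and>
        (1 / 2 ^ k) * (\<Sum>m\<in>{1..2^k}. \<Sum>m'\<in>{0..2^k} - {m}.
            \<Sum>u\<in>UNIV. pu u * (\<Sum>y\<in>{y\<in>words n. dec u y = m'}. W (enc u m) y)) \<le> eT \<and>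
        (1 / 2 ^ k) * (\<Sum>m\<in>{1..2^k}. \<Sum>m'\<in>{1..2^k} - {m}.
            \<Sum>u\<in>UNIV. pu u * (\<Sum>y\<in>{y\<in>words n. dec u y = m'}. W (enc u m) y)) \<le> eU)"

end

theory Submission
  imports Defs
begin


lemma mix2:
  fixes P f g :: "'i \<Rightarrow> real"
  assumes fin: "finite I" and P0: "\<And>i. i \<in> I \<Longrightarrow> P i \<ge> 0" and P1: "sum P I = 1"
    and fa: "(\<Sum>i\<in>I. P i * f i) \<le> a" and gb: "(\<Sum>i\<in>I. P i * g i) \<le> b"
  shows "\<exists>i\<in>I. \<exists>j\<in>I. \<exists>l::real. 0 \<le> l \<and> l \<le> 1 \<and>
           l * f i + (1 - l) * f j \<le> a \<and> l * g i + (1 - l) * g j \<le> b"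
proof (rule ccontr)
  assume H: "\<not> ?thesis"
  define I' where "I' = {i\<in>I. P i > 0}"
  have finI': "finite I'" using fin by (simp add: I'_def)
  have sub: "I' \<subseteq> I" by (auto simp: I'_def)
  have zero: "\<And>i. i \<in> I - I' \<Longrightarrow> P i = 0" using P0 by (force simp: I'_def)
  have red: "\<And>h. (\<Sum>i\<in>I. P i * h i) = (\<Sum>i\<in>I'. P i * h i)"
    by (rule sum.mono_neutral_right[OF fin sub]) (simp add: zero)
  have P1': "sum P I' = 1" using P1 sum.mono_neutral_right[OF fin sub, of P] zero by simp
  have pos: "\<And>i. i \<in> I' \<Longrightarrow> P i > 0" by (simp add: I'_def)
  have one: "\<And>i. i \<in> I' \<Longrightarrow> f i > a \<or> g i > b"
  proof -
    fix i assume i: "i \<in> I'"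
    show "f i > a \<or> g i > b"
    proof (rule ccontr)
      assume "\<not> (f i > a \<or> g i > b)"
      then have "f i \<le> a" "g i \<le> b" by auto
      then have "\<exists>i\<in>I. \<exists>j\<in>I. \<exists>l::real. 0 \<le> l \<and> l \<le> 1 \<and>
           l * f i + (1 - l) * f j \<le> a \<and> l * g i + (1 - l) * g j \<le> b"
        using i sub by (intro bexI[of _ i] exI[of _ 1]) auto
      then show False using H by blast
    qed
  qed
  define L where "L = {i\<in>I'. f i > a}"
  define R where "R = I' - L"
  have finL: "finite L" "finite R" using finI' by (auto simp: L_def R_def)
  have LR: "I' = L \<union> R" "L \<inter> R = {}" by (auto simp: L_def R_def)
  have Rp: "\<And>j. j \<in> R \<Longrightarrow> f j \<le> a \<and> g j > b" using one by (auto simp: L_def R_def)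
  have Lp: "\<And>i. i \<in> L \<Longrightarrow> f i > a" by (auto simp: L_def)
  have ne: "I' \<noteq> {}" using P1' by auto
  have fa': "(\<Sum>i\<in>I'. P i * f i) \<le> a" using fa red by simp
  have gb': "(\<Sum>i\<in>I'. P i * g i) \<le> b" using gb red by simp
  have Rne: "R \<noteq> {}"
  proof
    assume "R = {}"
    then have "\<And>i. i \<in> I' \<Longrightarrow> P i * f i > P i * a" using LR Lp pos by auto
    then have "(\<Sum>i\<in>I'. P i * f i) > (\<Sum>i\<in>I'. P i * a)"
      by (intro sum_strict_mono[OF finI' ne]) auto
    also have "(\<Sum>i\<in>I'. P i * a) = a" using P1' by (simp add: sum_distrib_right[symmetric])
    finally show False using fa' by simp
  qed
  have Lne: "L \<noteq> {}"
  proof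
    assume "L = {}"
    then have "\<And>i. i \<in> I' \<Longrightarrow> P i * g i > P i * b" using LR Rp pos by auto
    then have "(\<Sum>i\<in>I'. P i * g i) > (\<Sum>i\<in>I'. P i * b)"
      by (intro sum_strict_mono[OF finI' ne]) auto
    also have "(\<Sum>i\<in>I'. P i * b) = b" using P1' by (simp add: sum_distrib_right[symmetric])
    finally show False using gb' by simp
  qed
  define D where "D = (\<Sum>i\<in>L. P i * (f i - a))"
  define E where "E = (\<Sum>j\<in>R. P j * (a - f j))"
  define Ag where "Ag = (\<Sum>i\<in>L. P i * g i)"
  define Bg where "Bg = (\<Sum>j\<in>R. P j * g j)"
  define WL where "WL = sum P L"
  define WR where "WR = sum P R"
  have split: "\<And>h. (\<Sum>i\<in>I'. h i) = (\<Sum>i\<in>L. h i) + (\<Sum>i\<in>R. h i)"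
    using LR finL by (simp add: sum.union_disjoint)
  have WLR: "WL + WR = 1" using P1' split[of P] by (simp add: WL_def WR_def)
  have AB: "Ag + Bg \<le> b" using gb' split[of "\<lambda>i. P i * g i"] by (simp add: Ag_def Bg_def)
  have DE: "D \<le> E"
  proof -
    have "(\<Sum>i\<in>I'. P i * (f i - a)) = (\<Sum>i\<in>I'. P i * f i) - (\<Sum>i\<in>I'. P i * a)"
      by (simp add: algebra_simps sum_subtractf)
    also have "(\<Sum>i\<in>I'. P i * a) = a" using P1' by (simp add: sum_distrib_right[symmetric])
    finally have "(\<Sum>i\<in>I'. P i * (f i - a)) \<le> 0" using fa' by simp
    moreover have "E = - (\<Sum>j\<in>R. P j * (f j - a))"
      unfolding E_def sum_negf[symmetric] by (rule sum.cong) (auto simp: algebra_simps)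
    moreover have "(\<Sum>i\<in>I'. P i * (f i - a)) = D + (\<Sum>j\<in>R. P j * (f j - a))"
      using split[of "\<lambda>i. P i * (f i - a)"] by (simp add: D_def)
    ultimately show ?thesis by simp
  qed
  have E0: "E \<ge> 0" unfolding E_def proof (intro sum_nonneg)
    fix j assume j: "j \<in> R"
    then have "P j > 0" "f j \<le> a" using Rp pos LR by auto
    then show "P j * (a - f j) \<ge> 0" by simp
  qed
  have Bg: "Bg > b * WR"
  proof -
    have "(\<Sum>j\<in>R. P j * b) < Bg" unfolding Bg_def
      using Rp pos LR by (intro sum_strict_mono[OF finL(2) Rne]) auto
    then show ?thesis by (simp add: WR_def sum_distrib_left mult.commute)
  qed
  have pair: "\<And>i j. i \<in> L \<Longrightarrow> j \<in> R \<Longrightarrow>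
      P i * P j * ((a - f j) * g i + (f i - a) * g j) > P i * P j * (b * ((f i - a) + (a - f j)))"
  proof -
    fix i j assume i: "i \<in> L" and j: "j \<in> R"
    have fi: "f i > a" using Lp i by auto
    have fj: "f j \<le> a" "g j > b" using Rp j by auto
    define l where "l = (a - f j) / (f i - f j)"
    have den: "f i - f j > 0" using fi fj by simp
    have l0: "0 \<le> l" "l \<le> 1" using fi fj den by (auto simp: l_def divide_simps)
    have l2: "l * (f i - f j) = a - f j" using den by (simp add: l_def)
    have "l * f i + (1 - l) * f j = a" using l2 by (simp add: algebra_simps)
    then have nb: "\<not> (l * g i + (1 - l) * g j \<le> b)"
      using H i j LR sub l0 by blast
    then have "l * g i + (1 - l) * g j > b" by simp
    then have "(f i - f j) * (l * g i + (1 - l) * g j) > (f i - f j) * b" using den by simp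
    moreover have "(f i - f j) * (l * g i + (1 - l) * g j) = (l * (f i - f j)) * g i + ((f i - f j) - l*(f i - f j)) * g j" by (simp add: algebra_simps)
    moreover have "\<dots> = (a - f j) * g i + (f i - a) * g j" using l2 by simp
    ultimately have "(a - f j) * g i + (f i - a) * g j > b * ((f i - a) + (a - f j))"
      by (simp add: algebra_simps)
    moreover have "P i * P j > 0" using pos i j LR by auto
    ultimately show "P i * P j * ((a - f j) * g i + (f i - a) * g j) > P i * P j * (b * ((f i - a) + (a - f j)))"
      by (intro mult_strict_left_mono) auto
  qed
  have "(\<Sum>i\<in>L. \<Sum>j\<in>R. P i * P j * (b * ((f i - a) + (a - f j))))
      < (\<Sum>i\<in>L. \<Sum>j\<in>R. P i * P j * ((a - f j) * g i + (f i - a) * g j))"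
    using pair by (intro sum_strict_mono[OF finL(1) Lne] sum_strict_mono[OF finL(2) Rne]) auto
  also have "(\<Sum>i\<in>L. \<Sum>j\<in>R. P i * P j * ((a - f j) * g i + (f i - a) * g j)) = Ag * E + D * Bg"
  proof -
    have "(\<Sum>i\<in>L. \<Sum>j\<in>R. P i * P j * ((a - f j) * g i + (f i - a) * g j))
       = (\<Sum>i\<in>L. \<Sum>j\<in>R. (P i * g i) * (P j * (a - f j)) + (P i * (f i - a)) * (P j * g j))"
      by (intro sum.cong refl) (simp add: algebra_simps)
    also have "\<dots> = Ag * E + D * Bg" by (simp add: sum.distrib sum_product Ag_def E_def D_def Bg_def)
    finally show ?thesis .
  qed
  also have "(\<Sum>i\<in>L. \<Sum>j\<in>R. P i * P j * (b * ((f i - a) + (a - f j)))) = b * (D * WR + WL * E)"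
  proof -
    have "(\<Sum>i\<in>L. \<Sum>j\<in>R. P i * P j * (b * ((f i - a) + (a - f j))))
       = (\<Sum>i\<in>L. \<Sum>j\<in>R. b * ((P i * (f i - a)) * P j) + b * (P i * (P j * (a - f j))))"
      by (intro sum.cong refl) (simp add: algebra_simps)
    also have "\<dots> = b * (D * WR) + b * (WL * E)"
      by (simp add: sum.distrib sum_product WR_def E_def D_def WL_def sum_distrib_left[symmetric])
    finally show ?thesis by (simp add: algebra_simps)
  qed
  finally have X: "b * (D * WR + WL * E) < Ag * E + D * Bg" .
  have "Ag * E + D * Bg = E * (Ag + Bg) - (E - D) * Bg" by (simp add: algebra_simps)
  also have "\<dots> \<le> E * b - (E - D) * (b * WR)"
    using AB E0 DE Bg by (intro diff_mono mult_left_mono mult_left_mono) auto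
  also have "\<dots> = b * (D * WR + WL * E)"
  proof -
    have wl: "WL = 1 - WR" using WLR by simp
    show ?thesis unfolding wl by (simp add: algebra_simps)
  qed
  finally show False using X by simp
qed



definition Pc :: "nat set \<Rightarrow> ('x \<Rightarrow> real) \<Rightarrow> (nat \<Rightarrow> 'x) \<Rightarrow> real" where
  "Pc A Px c = (\<Prod>i\<in>A. Px (c i))"

lemma prod_two:
  assumes "finite A" "m \<in> A" "i \<in> A" "m \<noteq> i"
  shows "prod h A = h m * (h i * prod h (A - {m, i}))"
proof -
  have "A = insert m (insert i (A - {m, i}))" using assms by auto
  then have "prod h A = prod h (insert m (insert i (A - {m, i})))" by simp
  also have "\<dots> = h m * (h i * prod h (A - {m, i}))" using assms by simp
  finally show ?thesis .
qed

lemma prod_one: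
  assumes "finite A" "m \<in> A"
  shows "prod h A = h m * prod h (A - {m})"
  using assms by (simp add: prod.remove)

lemma pc_pair:
  assumes finA: "finite A" and finS: "finite S" and mA: "m \<in> A" and iA: "i \<in> A" and mi: "m \<noteq> i"
    and P1: "sum Px S = 1"
  shows "(\<Sum>c\<in>PiE A (\<lambda>_. S). Pc A Px c * (F (c m) * G (c i))) = (\<Sum>x\<in>S. Px x * F x) * (\<Sum>x\<in>S. Px x * G x)"
proof -
  define g where "g j x = (if j = m then Px x * F x else if j = i then Px x * G x else Px x)" for j x
  have "(\<Prod>j\<in>A. \<Sum>x\<in>S. g j x) = (\<Sum>c\<in>PiE A (\<lambda>_. S). \<Prod>j\<in>A. g j (c j))"
    by (rule prod_sum_PiE) (use finA finS in auto)
  also have "\<dots> = (\<Sum>c\<in>PiE A (\<lambda>_. S). Pc A Px c * (F (c m) * G (c i)))"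
  proof (rule sum.cong[OF refl])
    fix c
    have "(\<Prod>j\<in>A. g j (c j)) = g m (c m) * (g i (c i) * (\<Prod>j\<in>A - {m, i}. g j (c j)))"
      by (rule prod_two[OF finA mA iA mi])
    also have "(\<Prod>j\<in>A - {m, i}. g j (c j)) = (\<Prod>j\<in>A - {m, i}. Px (c j))"
      by (rule prod.cong) (auto simp: g_def)
    finally have 1: "(\<Prod>j\<in>A. g j (c j)) = Px (c m) * F (c m) * (Px (c i) * G (c i) * (\<Prod>j\<in>A - {m, i}. Px (c j)))"
      using mi by (simp add: g_def)
    have 2: "Pc A Px c = Px (c m) * (Px (c i) * (\<Prod>j\<in>A - {m, i}. Px (c j)))"
      unfolding Pc_def by (rule prod_two[OF finA mA iA mi])
    show "(\<Prod>j\<in>A. g j (c j)) = Pc A Px c * (F (c m) * G (c i))"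
      unfolding 1 2 by (simp add: algebra_simps)
  qed
  finally have "(\<Sum>c\<in>PiE A (\<lambda>_. S). Pc A Px c * (F (c m) * G (c i))) = (\<Prod>j\<in>A. \<Sum>x\<in>S. g j x)" ..
  also have "\<dots> = (\<Sum>x\<in>S. g m x) * ((\<Sum>x\<in>S. g i x) * (\<Prod>j\<in>A - {m, i}. \<Sum>x\<in>S. g j x))"
    by (rule prod_two[OF finA mA iA mi])
  also have "(\<Prod>j\<in>A - {m, i}. \<Sum>x\<in>S. g j x) = 1"
    using P1 by (intro prod.neutral) (auto simp: g_def)
  finally show ?thesis using mi by (simp add: g_def)
qed

lemma pc_single:
  assumes finA: "finite A" and finS: "finite S" and mA: "m \<in> A" and P1: "sum Px S = 1"
  shows "(\<Sum>c\<in>PiE A (\<lambda>_. S). Pc A Px c * F (c m)) = (\<Sum>x\<in>S. Px x * F x)"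
proof -
  define g where "g j x = (if j = m then Px x * F x else Px x)" for j x
  have "(\<Prod>j\<in>A. \<Sum>x\<in>S. g j x) = (\<Sum>c\<in>PiE A (\<lambda>_. S). \<Prod>j\<in>A. g j (c j))"
    by (rule prod_sum_PiE) (use finA finS in auto)
  also have "\<dots> = (\<Sum>c\<in>PiE A (\<lambda>_. S). Pc A Px c * F (c m))"
  proof (rule sum.cong[OF refl])
    fix c
    have "(\<Prod>j\<in>A. g j (c j)) = g m (c m) * (\<Prod>j\<in>A - {m}. g j (c j))"
      by (rule prod_one[OF finA mA])
    also have "(\<Prod>j\<in>A - {m}. g j (c j)) = (\<Prod>j\<in>A - {m}. Px (c j))"
      by (rule prod.cong) (auto simp: g_def)
    finally have 1: "(\<Prod>j\<in>A. g j (c j)) = Px (c m) * F (c m) * (\<Prod>j\<in>A - {m}. Px (c j))"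
      by (simp add: g_def)
    have 2: "Pc A Px c = Px (c m) * (\<Prod>j\<in>A - {m}. Px (c j))"
      unfolding Pc_def by (rule prod_one[OF finA mA])
    show "(\<Prod>j\<in>A. g j (c j)) = Pc A Px c * F (c m)"
      unfolding 1 2 by (simp add: algebra_simps)
  qed
  finally have "(\<Sum>c\<in>PiE A (\<lambda>_. S). Pc A Px c * F (c m)) = (\<Prod>j\<in>A. \<Sum>x\<in>S. g j x)" ..
  also have "\<dots> = (\<Sum>x\<in>S. g m x) * (\<Prod>j\<in>A - {m}. \<Sum>x\<in>S. g j x)"
    by (rule prod_one[OF finA mA])
  also have "(\<Prod>j\<in>A - {m}. \<Sum>x\<in>S. g j x) = 1"
    using P1 by (intro prod.neutral) (auto simp: g_def)
  finally show ?thesis by (simp add: g_def)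
qed

lemma pc_total:
  assumes finA: "finite A" and finS: "finite S" and mA: "m \<in> A" and P1: "sum Px S = 1"
  shows "(\<Sum>c\<in>PiE A (\<lambda>_. S). Pc A Px c) = 1"
  using pc_single[OF assms, of "\<lambda>_. 1"] P1 by simp

lemma pc_pair_gen:
  assumes finA: "finite A" and finS: "finite S" and mA: "m \<in> A" and iA: "i \<in> A" and mi: "m \<noteq> i"
    and P1: "sum Px S = 1"
  shows "(\<Sum>c\<in>PiE A (\<lambda>_. S). Pc A Px c * h (c m) (c i)) = (\<Sum>a\<in>S. Px a * (\<Sum>b\<in>S. Px b * h a b))"
proof -
  have "(\<Sum>c\<in>PiE A (\<lambda>_. S). Pc A Px c * h (c m) (c i))
      = (\<Sum>c\<in>PiE A (\<lambda>_. S). \<Sum>a\<in>S. Pc A Px c * ((if c m = a then 1 else 0) * h a (c i)))"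
  proof (rule sum.cong[OF refl])
    fix c assume c: "c \<in> PiE A (\<lambda>_. S)"
    then have "c m \<in> S" using mA by auto
    moreover have "(\<Sum>a\<in>S. (if c m = a then 1 else 0) * h a (c i)) = (\<Sum>a\<in>S. if c m = a then h a (c i) else 0)"
      by (rule sum.cong) auto
    ultimately have "(\<Sum>a\<in>S. (if c m = a then 1 else 0) * h a (c i)) = h (c m) (c i)"
      using finS by simp
    then show "Pc A Px c * h (c m) (c i) = (\<Sum>a\<in>S. Pc A Px c * ((if c m = a then 1 else 0) * h a (c i)))"
      by (simp add: sum_distrib_left[symmetric])
  qed
  also have "\<dots> = (\<Sum>a\<in>S. \<Sum>c\<in>PiE A (\<lambda>_. S). Pc A Px c * ((if c m = a then 1 else 0) * h a (c i)))"
    by (rule sum.swap)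
  also have "\<dots> = (\<Sum>a\<in>S. (\<Sum>x\<in>S. Px x * (if x = a then 1 else 0)) * (\<Sum>x\<in>S. Px x * h a x))"
    by (rule sum.cong[OF refl], rule pc_pair[OF assms])
  also have "\<dots> = (\<Sum>a\<in>S. Px a * (\<Sum>b\<in>S. Px b * h a b))"
    using finS by (intro sum.cong refl) (simp add: if_distrib cong: if_cong)
  finally show ?thesis .
qed



definition Ub :: "nat set \<Rightarrow> ('x \<Rightarrow> 'y \<Rightarrow> real) \<Rightarrow> (nat \<Rightarrow> 'x) \<Rightarrow> 'y \<Rightarrow> nat \<Rightarrow> bool" where
  "Ub A W c y j \<longleftrightarrow> (\<forall>i\<in>A. i \<noteq> j \<longrightarrow> W (c i) y < W (c j) y)"

lemma Pc_nonneg: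
  assumes "c \<in> PiE A (\<lambda>_. S)" "\<forall>x\<in>S. Px x \<ge> 0"
  shows "Pc A Px c \<ge> 0"
  unfolding Pc_def using assms by (intro prod_nonneg) auto

lemma errbound:
  fixes W :: "'x \<Rightarrow> 'y \<Rightarrow> real"
  assumes finA: "finite A" and finS: "finite S" and finT: "finite T" and mA: "m \<in> A"
    and P1: "sum Px S = 1" and Px0: "\<forall>x\<in>S. Px x \<ge> 0" and W0: "\<forall>x\<in>S. \<forall>y\<in>T. W x y \<ge> 0"
  shows "(\<Sum>c\<in>PiE A (\<lambda>_. S). Pc A Px c * (\<Sum>y\<in>T. W (c m) y * (if Ub A W c y m then 0 else 1)))
   \<le> (\<Sum>x\<in>S. \<Sum>y\<in>T. Px x * W x y * min 1 ((real (card A) - 1) * (\<Sum>xb\<in>{xb\<in>S. W xb y \<ge> W x y}. Px xb)))"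
proof -
  define C where "C = PiE A (\<lambda>_. S)"
  define N where "N = real (card A) - 1"
  define q where "q x y = (\<Sum>xb\<in>{xb\<in>S. W xb y \<ge> W x y}. Px xb)" for x y
  define \<tau> where "\<tau> x y = (N * q x y \<le> 1)" for x y
  define H where "H y a b = W a y * (if \<tau> a y then (if W b y \<ge> W a y then 1 else 0) else 0)" for y a b
  define K where "K y a = W a y * (if \<tau> a y then 0 else 1)" for y a
  have finC: "finite C" unfolding C_def using finA finS by (simp add: finite_PiE)
  have Pc0: "\<And>c. c \<in> C \<Longrightarrow> Pc A Px c \<ge> 0" unfolding C_def using Px0 Pc_nonneg by blast
  have step1: "\<And>c y. c \<in> C \<Longrightarrow> y \<in> T \<Longrightarrow>
     W (c m) y * (if Ub A W c y m then 0 else 1) \<le> (\<Sum>i\<in>A-{m}. H y (c m) (c i)) + K y (c m)"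
  proof -
    fix c y assume c: "c \<in> C" and y: "y \<in> T"
    have cm: "c m \<in> S" using c mA by (auto simp: C_def)
    have w0: "W (c m) y \<ge> 0" using W0 cm y by auto
    show "W (c m) y * (if Ub A W c y m then 0 else 1) \<le> (\<Sum>i\<in>A-{m}. H y (c m) (c i)) + K y (c m)"
    proof (cases "\<tau> (c m) y")
      case True
      have "(if Ub A W c y m then 0 else 1) \<le> (\<Sum>i\<in>A-{m}. (if W (c i) y \<ge> W (c m) y then 1 else 0::real))"
      proof (cases "Ub A W c y m")
        case True then show ?thesis by (simp add: sum_nonneg)
      next
        case False
        then obtain i where i: "i \<in> A" "i \<noteq> m" "W (c i) y \<ge> W (c m) y" unfolding Ub_def by auto
        have "(if W (c i) y \<ge> W (c m) y then 1 else 0::real) \<le> (\<Sum>i\<in>A-{m}. (if W (c i) y \<ge> W (c m) y then 1 else 0::real))"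
          by (rule member_le_sum) (use i finA in auto)
        then show ?thesis using False i by simp
      qed
      then have "W (c m) y * (if Ub A W c y m then 0 else 1) \<le> W (c m) y * (\<Sum>i\<in>A-{m}. (if W (c i) y \<ge> W (c m) y then 1 else 0::real))"
        using w0 by (intro mult_left_mono)
      also have "\<dots> = (\<Sum>i\<in>A-{m}. H y (c m) (c i)) + K y (c m)"
        using True by (simp add: H_def K_def sum_distrib_left)
      finally show ?thesis .
    next
      case False
      then show ?thesis using w0 by (simp add: H_def K_def)
    qed
  qed
  have Pq: "\<And>y a. (\<Sum>b\<in>S. Px b * H y a b) = W a y * (if \<tau> a y then q a y else 0)"
  proof -
    fix y a
    have "(\<Sum>b\<in>S. Px b * H y a b) = W a y * (if \<tau> a y then (\<Sum>b\<in>S. if W b y \<ge> W a y then Px b else 0) else 0)"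
    proof (cases "\<tau> a y")
      case True
      then have "(\<Sum>b\<in>S. Px b * H y a b) = (\<Sum>b\<in>S. W a y * (if W b y \<ge> W a y then Px b else 0))"
        by (intro sum.cong refl) (simp add: H_def)
      then show ?thesis using True by (simp add: sum_distrib_left)
    next
      case False
      then show ?thesis by (simp add: H_def)
    qed
    also have "(\<Sum>b\<in>S. if W b y \<ge> W a y then Px b else 0) = q a y"
      unfolding q_def using finS by (simp add: sum.inter_filter)
    finally show "(\<Sum>b\<in>S. Px b * H y a b) = W a y * (if \<tau> a y then q a y else 0)" .
  qed
  have cardA: "real (card (A - {m})) = N"
  proof -
    have "card A \<ge> 1" using finA mA by (metis One_nat_def Suc_leI card_gt_0_iff empty_iff)
    then show ?thesis using finA mA by (simp add: card_Diff_singleton of_nat_diff N_def)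
  qed
  have step2: "\<And>y. (\<Sum>c\<in>C. Pc A Px c * ((\<Sum>i\<in>A-{m}. H y (c m) (c i)) + K y (c m)))
        = (\<Sum>a\<in>S. Px a * W a y * min 1 (N * q a y))"
  proof -
    fix y
    have "(\<Sum>c\<in>C. Pc A Px c * ((\<Sum>i\<in>A-{m}. H y (c m) (c i)) + K y (c m)))
        = (\<Sum>c\<in>C. \<Sum>i\<in>A-{m}. Pc A Px c * H y (c m) (c i)) + (\<Sum>c\<in>C. Pc A Px c * K y (c m))"
      by (simp add: distrib_left sum_distrib_left sum.distrib)
    also have "(\<Sum>c\<in>C. \<Sum>i\<in>A-{m}. Pc A Px c * H y (c m) (c i)) = (\<Sum>i\<in>A-{m}. \<Sum>c\<in>C. Pc A Px c * H y (c m) (c i))"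
      by (rule sum.swap)
    also have "\<dots> = (\<Sum>i\<in>A-{m}. \<Sum>a\<in>S. Px a * (W a y * (if \<tau> a y then q a y else 0)))"
    proof (rule sum.cong[OF refl])
      fix i assume i: "i \<in> A - {m}"
      have "(\<Sum>c\<in>C. Pc A Px c * H y (c m) (c i)) = (\<Sum>a\<in>S. Px a * (\<Sum>b\<in>S. Px b * H y a b))"
        unfolding C_def by (rule pc_pair_gen) (use finA finS mA i P1 in auto)
      then show "(\<Sum>c\<in>C. Pc A Px c * H y (c m) (c i)) = (\<Sum>a\<in>S. Px a * (W a y * (if \<tau> a y then q a y else 0)))"
        by (simp add: Pq)
    qed
    also have "\<dots> = N * (\<Sum>a\<in>S. Px a * (W a y * (if \<tau> a y then q a y else 0)))"
      using cardA by simp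
    also have "(\<Sum>c\<in>C. Pc A Px c * K y (c m)) = (\<Sum>a\<in>S. Px a * K y a)"
      unfolding C_def by (rule pc_single) (use finA finS mA P1 in auto)
    also have "N * (\<Sum>a\<in>S. Px a * (W a y * (if \<tau> a y then q a y else 0))) + (\<Sum>a\<in>S. Px a * K y a)
       = (\<Sum>a\<in>S. Px a * W a y * min 1 (N * q a y))"
      unfolding sum_distrib_left sum.distrib[symmetric]
      by (intro sum.cong refl) (auto simp: K_def \<tau>_def min_def algebra_simps)
    finally show "(\<Sum>c\<in>C. Pc A Px c * ((\<Sum>i\<in>A-{m}. H y (c m) (c i)) + K y (c m)))
        = (\<Sum>a\<in>S. Px a * W a y * min 1 (N * q a y))" .
  qed
  have "(\<Sum>c\<in>C. Pc A Px c * (\<Sum>y\<in>T. W (c m) y * (if Ub A W c y m then 0 else 1)))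
      \<le> (\<Sum>c\<in>C. Pc A Px c * (\<Sum>y\<in>T. (\<Sum>i\<in>A-{m}. H y (c m) (c i)) + K y (c m)))"
  proof (rule sum_mono)
    fix c assume c: "c \<in> C"
    have "(\<Sum>y\<in>T. W (c m) y * (if Ub A W c y m then 0 else 1)) \<le> (\<Sum>y\<in>T. (\<Sum>i\<in>A-{m}. H y (c m) (c i)) + K y (c m))"
      by (rule sum_mono) (rule step1[OF c])
    then show "Pc A Px c * (\<Sum>y\<in>T. W (c m) y * (if Ub A W c y m then 0 else 1)) \<le> Pc A Px c * (\<Sum>y\<in>T. (\<Sum>i\<in>A-{m}. H y (c m) (c i)) + K y (c m))"
      by (rule mult_left_mono) (rule Pc0[OF c])
  qed
  also have "\<dots> = (\<Sum>y\<in>T. \<Sum>c\<in>C. Pc A Px c * ((\<Sum>i\<in>A-{m}. H y (c m) (c i)) + K y (c m)))"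
    by (simp add: sum_distrib_left sum.swap[of _ C])
  also have "\<dots> = (\<Sum>y\<in>T. \<Sum>a\<in>S. Px a * W a y * min 1 (N * q a y))"
    using step2 by simp
  also have "\<dots> = (\<Sum>a\<in>S. \<Sum>y\<in>T. Px a * W a y * min 1 (N * q a y))"
    by (rule sum.swap)
  finally show ?thesis unfolding C_def N_def q_def .
qed



definition tr :: "nat \<Rightarrow> nat \<Rightarrow> nat \<Rightarrow> nat" where
  "tr j j' i = (if i = j then j' else if i = j' then j else i)"

lemma tr_tr[simp]: "tr j j' (tr j j' i) = i" by (simp add: tr_def)

lemma pc_swap:
  fixes W :: "'x \<Rightarrow> 'y \<Rightarrow> real"
  assumes finA: "finite A" and jA: "j \<in> A" and j'A: "j' \<in> A" and mA: "m \<in> A" and mj: "m \<noteq> j" "m \<noteq> j'"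
  shows "(\<Sum>c\<in>PiE A (\<lambda>_. S). Pc A Px c * (\<Sum>y\<in>T. W (c m) y * (if Ub A W c y j then 1 else 0)))
       = (\<Sum>c\<in>PiE A (\<lambda>_. S). Pc A Px c * (\<Sum>y\<in>T. W (c m) y * (if Ub A W c y j' then 1 else 0)))"
proof (rule sum.reindex_bij_witness[of _ "\<lambda>c. c \<circ> tr j j'" "\<lambda>c. c \<circ> tr j j'"])
  have trA: "\<And>i. i \<in> A \<Longrightarrow> tr j j' i \<in> A" using jA j'A by (auto simp: tr_def)
  have trN: "\<And>i. i \<notin> A \<Longrightarrow> tr j j' i = i" using jA j'A by (auto simp: tr_def)
  show "\<And>a. a \<in> PiE A (\<lambda>_. S) \<Longrightarrow> a \<circ> tr j j' \<circ> tr j j' = a" by (auto simp: fun_eq_iff)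
  show "\<And>a. a \<in> PiE A (\<lambda>_. S) \<Longrightarrow> a \<circ> tr j j' \<circ> tr j j' = a" by (auto simp: fun_eq_iff)
  show "\<And>a. a \<in> PiE A (\<lambda>_. S) \<Longrightarrow> a \<circ> tr j j' \<in> PiE A (\<lambda>_. S)"
    using trA trN by (auto simp: PiE_def extensional_def Pi_def)
  then show "\<And>a. a \<in> PiE A (\<lambda>_. S) \<Longrightarrow> a \<circ> tr j j' \<in> PiE A (\<lambda>_. S)" .
  fix c assume c: "c \<in> PiE A (\<lambda>_. S)"
  have P: "Pc A Px (c \<circ> tr j j') = Pc A Px c"
    unfolding Pc_def
  proof (rule prod.reindex_bij_witness[of _ "tr j j'" "tr j j'"])
    show "\<And>a. a \<in> A \<Longrightarrow> tr j j' (tr j j' a) = a" by simp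
    show "\<And>a. a \<in> A \<Longrightarrow> tr j j' (tr j j' a) = a" by simp
    show "\<And>a. a \<in> A \<Longrightarrow> tr j j' a \<in> A" by (rule trA)
    show "\<And>a. a \<in> A \<Longrightarrow> tr j j' a \<in> A" by (rule trA)
    show "\<And>a. a \<in> A \<Longrightarrow> Px (c (tr j j' a)) = Px ((c \<circ> tr j j') a)" by simp
  qed
  have m: "(c \<circ> tr j j') m = c m" using mj by (simp add: tr_def)
  have U: "\<And>y. Ub A W (c \<circ> tr j j') y j' = Ub A W c y j"
  proof -
    fix y
    have tj: "tr j j' j' = j" by (simp add: tr_def)
    show "Ub A W (c \<circ> tr j j') y j' = Ub A W c y j"
      unfolding Ub_def
    proof
      assume H: "\<forall>i\<in>A. i \<noteq> j' \<longrightarrow> W ((c \<circ> tr j j') i) y < W ((c \<circ> tr j j') j') y"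
      show "\<forall>i\<in>A. i \<noteq> j \<longrightarrow> W (c i) y < W (c j) y"
      proof (intro ballI impI)
        fix i assume i: "i \<in> A" "i \<noteq> j"
        have "tr j j' i \<in> A" using i trA by blast
        have "tr j j' i \<noteq> j'" using i(2) tj tr_tr[of j j' i] by metis
        then show "W (c i) y < W (c j) y" using \<open>tr j j' i \<in> A\<close> \<open>tr j j' i \<noteq> j'\<close> H[rule_format, of "tr j j' i"] tj by simp
      qed
    next
      assume H: "\<forall>i\<in>A. i \<noteq> j \<longrightarrow> W (c i) y < W (c j) y"
      show "\<forall>i\<in>A. i \<noteq> j' \<longrightarrow> W ((c \<circ> tr j j') i) y < W ((c \<circ> tr j j') j') y"
      proof (intro ballI impI)
        fix i assume i: "i \<in> A" "i \<noteq> j'"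
        have "tr j j' i \<in> A" using i trA by blast
        have "tr j j' i \<noteq> j" using i(2) tj tr_tr[of j j' i] tr_tr[of j j' j'] by metis
        then show "W ((c \<circ> tr j j') i) y < W ((c \<circ> tr j j') j') y" using \<open>tr j j' i \<in> A\<close> \<open>tr j j' i \<noteq> j\<close> H[rule_format, of "tr j j' i"] tj by simp
      qed
    qed
  qed
  show "Pc A Px (c \<circ> tr j j') * (\<Sum>y\<in>T. W ((c \<circ> tr j j') m) y * (if Ub A W (c \<circ> tr j j') y j' then 1 else 0))
      = Pc A Px c * (\<Sum>y\<in>T. W (c m) y * (if Ub A W c y j then 1 else 0))"
    using P m U by simp
qed

lemma disj:
  fixes W :: "'x \<Rightarrow> 'y \<Rightarrow> real"
  assumes finA: "finite A" and mA: "m \<in> A"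
  shows "(\<Sum>j\<in>A-{m}. (if Ub A W c y j then 1 else 0::real)) \<le> (if Ub A W c y m then 0 else 1)"
proof (cases "\<exists>j\<in>A-{m}. Ub A W c y j")
  case False
  then have "(\<Sum>j\<in>A-{m}. (if Ub A W c y j then 1 else 0::real)) = 0" by (intro sum.neutral) auto
  then show ?thesis by simp
next
  case True
  then obtain j0 where j0: "j0 \<in> A - {m}" "Ub A W c y j0" by auto
  have nm: "\<not> Ub A W c y m"
  proof
    assume "Ub A W c y m"
    then have "W (c j0) y < W (c m) y" using j0 unfolding Ub_def by auto
    moreover have "W (c m) y < W (c j0) y" using j0 mA unfolding Ub_def by auto
    ultimately show False by simp
  qed
  have others: "\<And>j. j \<in> A - {m} \<Longrightarrow> j \<noteq> j0 \<Longrightarrow> \<not> Ub A W c y j"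
  proof
    fix j assume j: "j \<in> A - {m}" "j \<noteq> j0" and u: "Ub A W c y j"
    then have "W (c j0) y < W (c j) y" using j0 unfolding Ub_def by auto
    moreover have "W (c j) y < W (c j0) y" using j0 j unfolding Ub_def by auto
    ultimately show False by simp
  qed
  have "(\<Sum>j\<in>A-{m}. (if Ub A W c y j then 1 else 0::real)) = (\<Sum>j\<in>A-{m}. if j = j0 then 1 else 0)"
    by (rule sum.cong) (use j0 others in auto)
  also have "\<dots> = 1" using j0 finA by simp
  finally show ?thesis using nm by simp
qed



lemma finite_words: "finite (words n :: ('a::finite) list set)"
proof -
  have "words n = {xs :: 'a list. set xs \<subseteq> UNIV \<and> length xs = n}" by (auto simp: words_def)
  then show ?thesis using finite_lists_length_eq[OF finite_UNIV, of n] by simp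
qed

definition dcd :: "nat set \<Rightarrow> nat \<Rightarrow> ('x \<Rightarrow> 'y \<Rightarrow> real) \<Rightarrow> (nat \<Rightarrow> 'x) \<Rightarrow> 'y \<Rightarrow> nat" where
  "dcd A K W c y = (if \<exists>j\<in>{1..K}. Ub A W c y j then (SOME j. j \<in> {1..K} \<and> Ub A W c y j) else 0)"

lemma Ub_unique: "j \<in> A \<Longrightarrow> j' \<in> A \<Longrightarrow> Ub A W c y j \<Longrightarrow> Ub A W c y j' \<Longrightarrow> j = j'"
  unfolding Ub_def by (metis less_asym)

lemma dcd_range: "dcd A K W c y \<in> {0..K}"
proof (cases "\<exists>j\<in>{1..K}. Ub A W c y j")
  case True
  then have "(SOME j. j \<in> {1..K} \<and> Ub A W c y j) \<in> {1..K}" by (metis (mono_tags, lifting) someI_ex)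
  then show ?thesis using True by (auto simp: dcd_def)
qed (auto simp: dcd_def)

lemma dcd_iff:
  assumes "j \<in> {1..K}" "{1..K} \<subseteq> A"
  shows "dcd A K W c y = j \<longleftrightarrow> Ub A W c y j"
proof (cases "\<exists>j\<in>{1..K}. Ub A W c y j")
  case True
  define s where "s = (SOME j. j \<in> {1..K} \<and> Ub A W c y j)"
  have s: "s \<in> {1..K}" "Ub A W c y s" using True unfolding s_def by (metis (mono_tags, lifting) someI_ex)+
  have d: "dcd A K W c y = s" using True by (simp add: dcd_def s_def)
  have sj: "s \<in> A" "j \<in> A" using s assms by auto
  show ?thesis unfolding d using s sj Ub_unique[of s A j W c y] by auto
next
  case False
  then show ?thesis using assms by (auto simp: dcd_def)
qed

lemma code_T:
  assumes K1: "m \<in> {1..K}" and sub: "{1..K} \<subseteq> A" and finT: "finite T"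
  shows "(\<Sum>m'\<in>{0..K} - {m}. \<Sum>y\<in>{y\<in>T. dcd A K W c y = m'}. W (c m) y)
       = (\<Sum>y\<in>T. W (c m) y * (if Ub A W c y m then 0 else 1))"
proof -
  have "(\<Sum>m'\<in>{0..K} - {m}. \<Sum>y\<in>{y\<in>T. dcd A K W c y = m'}. W (c m) y)
      = (\<Sum>m'\<in>{0..K} - {m}. \<Sum>y\<in>{y\<in>{y\<in>T. dcd A K W c y \<noteq> m}. dcd A K W c y = m'}. W (c m) y)"
    by (intro sum.cong refl) auto
  also have "\<dots> = (\<Sum>y\<in>{y\<in>T. dcd A K W c y \<noteq> m}. W (c m) y)"
    by (rule sum.group) (use finT dcd_range in auto)
  also have "\<dots> = (\<Sum>y\<in>T. if dcd A K W c y \<noteq> m then W (c m) y else 0)"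
    using finT by (simp add: sum.inter_filter)
  also have "\<dots> = (\<Sum>y\<in>T. W (c m) y * (if Ub A W c y m then 0 else 1))"
  proof (intro sum.cong refl)
    fix y
    have "dcd A K W c y = m \<longleftrightarrow> Ub A W c y m" by (rule dcd_iff[OF K1 sub])
    then show "(if dcd A K W c y \<noteq> m then W (c m) y else 0) = W (c m) y * (if Ub A W c y m then 0 else 1)" by simp
  qed
  finally show ?thesis .
qed

lemma code_U:
  assumes sub: "{1..K} \<subseteq> A" and finT: "finite T"
  shows "(\<Sum>m'\<in>{1..K} - {m}. \<Sum>y\<in>{y\<in>T. dcd A K W c y = m'}. W (c m) y)
       = (\<Sum>m'\<in>{1..K} - {m}. \<Sum>y\<in>T. W (c m) y * (if Ub A W c y m' then 1 else 0))"
proof (rule sum.cong[OF refl])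
  fix m' assume m': "m' \<in> {1..K} - {m}"
  have "(\<Sum>y\<in>{y\<in>T. dcd A K W c y = m'}. W (c m) y) = (\<Sum>y\<in>T. if dcd A K W c y = m' then W (c m) y else 0)"
    using finT by (simp add: sum.inter_filter)
  also have "\<dots> = (\<Sum>y\<in>T. W (c m) y * (if Ub A W c y m' then 1 else 0))"
  proof (intro sum.cong refl)
    fix y
    have "dcd A K W c y = m' \<longleftrightarrow> Ub A W c y m'" by (rule dcd_iff) (use m' sub in auto)
    then show "(if dcd A K W c y = m' then W (c m) y else 0) = W (c m) y * (if Ub A W c y m' then 1 else 0)" by simp
  qed
  finally show "(\<Sum>y\<in>{y\<in>T. dcd A K W c y = m'}. W (c m) y) = (\<Sum>y\<in>T. W (c m) y * (if Ub A W c y m' then 1 else 0))" .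
qed



lemma mix_expr:
  fixes F :: "bool \<Rightarrow> nat \<Rightarrow> nat \<Rightarrow> real"
  shows "(1/K) * (\<Sum>m\<in>I. \<Sum>m'\<in>J m. \<Sum>u\<in>UNIV. (if u then l else 1 - l) * F u m m')
    = l * ((1/K) * (\<Sum>m\<in>I. \<Sum>m'\<in>J m. F True m m')) + (1 - l) * ((1/K) * (\<Sum>m\<in>I. \<Sum>m'\<in>J m. F False m m'))"
proof -
  have h: "(\<Sum>m\<in>I. \<Sum>m'\<in>J m. \<Sum>u\<in>UNIV. (if u then l else 1 - l) * F u m m')
     = l * (\<Sum>m\<in>I. \<Sum>m'\<in>J m. F True m m') + (1 - l) * (\<Sum>m\<in>I. \<Sum>m'\<in>J m. F False m m')"
    by (simp add: UNIV_bool sum.distrib sum_distrib_left)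
  have g: "\<And>a X Y::real. a * (l * X + (1 - l) * Y) = l * (a * X) + (1 - l) * (a * Y)"
    by (simp add: algebra_simps)
  show ?thesis unfolding h by (rule g)
qed

lemma frac_le: "(K::nat) \<le> M \<Longrightarrow> 2 \<le> M \<Longrightarrow> (real K - 1) / (real M - 1) \<le> real K / real M"
  by (simp add: divide_simps) (simp add: algebra_simps)

theorem theorem1:
  fixes W :: "('x::finite) list \<Rightarrow> ('y::finite) list \<Rightarrow> real"
    and Px :: "'x list \<Rightarrow> real"
    and n k \<Delta> :: nat
  assumes "n \<ge> 1"
    and "channel n W"
    and "pmf_on (words n) Px"
  shows "\<exists>eT eU. is_code n k W eT eU \<and>
           eT \<le> RCU n W Px (k + \<Delta>) \<and>
           eU \<le> RCU n W Px (k + \<Delta>) * 2 powr (- real \<Delta>)"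
proof -
  let ?K = "(2::nat) ^ k"
  let ?M = "(2::nat) ^ (k + \<Delta>)"
  define A where "A = {1..?M}"
  define Sx where "Sx = (words n :: 'x list set)"
  define Sy where "Sy = (words n :: 'y list set)"
  define C where "C = PiE A (\<lambda>_. Sx)"
  define R where "R = RCU n W Px (k + \<Delta>)"
  have finSx: "finite Sx" unfolding Sx_def by (rule finite_words)
  have finSy: "finite Sy" unfolding Sy_def by (rule finite_words)
  have finA: "finite A" by (simp add: A_def)
  have finC: "finite C" unfolding C_def using finA finSx by (simp add: finite_PiE)
  have KM: "?K \<le> ?M" by (simp add: power_increasing)
  have K1: "?K \<ge> 1" by simp
  have sub: "{1..?K} \<subseteq> A" using KM by (auto simp: A_def)
  have oneA: "1 \<in> A" using sub K1 by auto
  have Px0: "\<forall>x\<in>Sx. Px x \<ge> 0" and P1: "sum Px Sx = 1"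
    using assms(3) by (auto simp: pmf_on_def Sx_def)
  have W0: "\<forall>x\<in>Sx. \<forall>y\<in>Sy. W x y \<ge> 0"
    using assms(2) by (auto simp: channel_def pmf_on_def Sx_def Sy_def)
  have cardA: "real (card A) - 1 = 2 ^ (k + \<Delta>) - 1" by (simp add: A_def)
  have EB: "\<And>m. m \<in> A \<Longrightarrow> (\<Sum>c\<in>C. Pc A Px c * (\<Sum>y\<in>Sy. W (c m) y * (if Ub A W c y m then 0 else 1))) \<le> R"
  proof -
    fix m assume m: "m \<in> A"
    have "(\<Sum>c\<in>C. Pc A Px c * (\<Sum>y\<in>Sy. W (c m) y * (if Ub A W c y m then 0 else 1)))
      \<le> (\<Sum>x\<in>Sx. \<Sum>y\<in>Sy. Px x * W x y * min 1 ((real (card A) - 1) * (\<Sum>xb\<in>{xb\<in>Sx. W xb y \<ge> W x y}. Px xb)))"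
      unfolding C_def by (rule errbound) (use finA finSx finSy m P1 Px0 W0 in auto)
    also have "\<dots> = R" unfolding cardA R_def RCU_def Sx_def Sy_def by simp
    finally show "(\<Sum>c\<in>C. Pc A Px c * (\<Sum>y\<in>Sy. W (c m) y * (if Ub A W c y m then 0 else 1))) \<le> R" .
  qed
  have two: "(0::real) \<le> 2 ^ (k + \<Delta>) - 1" by simp
  have R0: "R \<ge> 0" unfolding R_def RCU_def
  proof (intro sum_nonneg)
    fix x y assume x: "x \<in> (words n :: 'x list set)" and y: "y \<in> (words n :: 'y list set)"
    have "sum Px {xb \<in> words n. W x y \<le> W xb y} \<ge> 0" by (rule sum_nonneg) (use Px0 in \<open>auto simp: Sx_def\<close>)
    moreover have "Px x \<ge> 0" "W x y \<ge> 0" using Px0 W0 x y by (auto simp: Sx_def Sy_def)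
    ultimately show "0 \<le> Px x * W x y * min 1 ((2 ^ (k + \<Delta>) - 1) * sum Px {xb \<in> words n. W x y \<le> W xb y})"
      using two by (intro mult_nonneg_nonneg) auto
  qed
  have Pc0: "\<And>c. c \<in> C \<Longrightarrow> Pc A Px c \<ge> 0" unfolding C_def using Px0 Pc_nonneg by blast
  have Ptot: "sum (Pc A Px) C = 1" unfolding C_def by (rule pc_total[OF finA finSx oneA P1])
  define ET where "ET c = (1 / ?K) * (\<Sum>m\<in>{1..?K}. \<Sum>y\<in>Sy. W (c m) y * (if Ub A W c y m then 0 else 1))" for c
  define EU where "EU c = (1 / ?K) * (\<Sum>m\<in>{1..?K}. \<Sum>m'\<in>{1..?K} - {m}. \<Sum>y\<in>Sy. W (c m) y * (if Ub A W c y m' then 1 else 0))" for c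
  have ETa: "(\<Sum>c\<in>C. Pc A Px c * ET c) \<le> R"
  proof -
    have "(\<Sum>c\<in>C. Pc A Px c * ET c) = (1 / ?K) * (\<Sum>m\<in>{1..?K}. \<Sum>c\<in>C. Pc A Px c * (\<Sum>y\<in>Sy. W (c m) y * (if Ub A W c y m then 0 else 1)))"
      unfolding ET_def by (simp add: sum_distrib_left sum.swap[of _ C] algebra_simps)
    also have "\<dots> \<le> (1 / ?K) * (\<Sum>m\<in>{1..?K}. R)"
      using EB sub by (intro mult_left_mono sum_mono) auto
    also have "\<dots> = R" by simp
    finally show ?thesis .
  qed
  define V where "V m j = (\<Sum>c\<in>C. Pc A Px c * (\<Sum>y\<in>Sy. W (c m) y * (if Ub A W c y j then 1 else 0)))" for m j
  have Vsum: "\<And>m. m \<in> {1..?K} \<Longrightarrow> (\<Sum>m'\<in>{1..?K} - {m}. V m m') \<le> (real ?K / real ?M) * R"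
  proof -
    fix m assume m: "m \<in> {1..?K}"
    show "(\<Sum>m'\<in>{1..?K} - {m}. V m m') \<le> (real ?K / real ?M) * R"
    proof (cases "?K = 1")
      case True
      then have e: "{1..?K} - {m} = {}" using m by auto
      show ?thesis unfolding e using R0 by simp
    next
      case False
      then have K2: "?K \<ge> 2" using K1 by linarith
      then have M2: "?M \<ge> 2" using KM by linarith
      have mA: "m \<in> A" using m sub by auto
      have cardAm: "real (card (A - {m})) = real ?M - 1" using mA M2 by (simp add: A_def)
      have each: "\<And>j. j \<in> A - {m} \<Longrightarrow> V m j \<le> R / (real ?M - 1)"
      proof -
        fix j assume j: "j \<in> A - {m}"
        have "(\<Sum>j'\<in>A - {m}. V m j') = (\<Sum>j'\<in>A - {m}. V m j)"
        proof (rule sum.cong[OF refl])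
          fix j' assume j': "j' \<in> A - {m}"
          show "V m j' = V m j" unfolding V_def C_def
            by (rule pc_swap) (use finA j j' mA in auto)
        qed
        also have "\<dots> = (real ?M - 1) * V m j" using cardAm by simp
        finally have s1: "(\<Sum>j'\<in>A - {m}. V m j') = (real ?M - 1) * V m j" .
        have "(\<Sum>j'\<in>A - {m}. V m j') = (\<Sum>c\<in>C. Pc A Px c * (\<Sum>y\<in>Sy. W (c m) y * (\<Sum>j'\<in>A - {m}. (if Ub A W c y j' then 1 else 0))))"
        proof -
          have "(\<Sum>j'\<in>A - {m}. V m j') = (\<Sum>c\<in>C. \<Sum>j'\<in>A - {m}. Pc A Px c * (\<Sum>y\<in>Sy. W (c m) y * (if Ub A W c y j' then 1 else 0)))"
            unfolding V_def by (rule sum.swap)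
          also have "\<dots> = (\<Sum>c\<in>C. Pc A Px c * (\<Sum>y\<in>Sy. W (c m) y * (\<Sum>j'\<in>A - {m}. (if Ub A W c y j' then 1 else 0))))"
          proof (rule sum.cong[OF refl])
            fix c
            have e1: "(\<Sum>j'\<in>A - {m}. Pc A Px c * (\<Sum>y\<in>Sy. W (c m) y * (if Ub A W c y j' then 1 else 0)))
               = Pc A Px c * (\<Sum>j'\<in>A - {m}. \<Sum>y\<in>Sy. W (c m) y * (if Ub A W c y j' then 1 else 0))"
              by (simp add: sum_distrib_left)
            have e2: "(\<Sum>j'\<in>A - {m}. \<Sum>y\<in>Sy. W (c m) y * (if Ub A W c y j' then 1 else 0))
               = (\<Sum>y\<in>Sy. \<Sum>j'\<in>A - {m}. W (c m) y * (if Ub A W c y j' then 1 else 0))"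
              by (rule sum.swap)
            have e3: "\<And>y. (\<Sum>j'\<in>A - {m}. W (c m) y * (if Ub A W c y j' then 1 else 0))
               = W (c m) y * (\<Sum>j'\<in>A - {m}. (if Ub A W c y j' then 1 else 0))"
              by (simp add: sum_distrib_left)
            show "(\<Sum>j'\<in>A - {m}. Pc A Px c * (\<Sum>y\<in>Sy. W (c m) y * (if Ub A W c y j' then 1 else 0)))
               = Pc A Px c * (\<Sum>y\<in>Sy. W (c m) y * (\<Sum>j'\<in>A - {m}. (if Ub A W c y j' then 1 else 0)))"
              unfolding e1 e2 e3 ..
          qed
          finally show ?thesis .
        qed
        also have "\<dots> \<le> (\<Sum>c\<in>C. Pc A Px c * (\<Sum>y\<in>Sy. W (c m) y * (if Ub A W c y m then 0 else 1)))"
        proof (rule sum_mono)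
          fix c assume c: "c \<in> C"
          have cm: "c m \<in> Sx" using c mA by (auto simp: C_def)
          have "(\<Sum>y\<in>Sy. W (c m) y * (\<Sum>j'\<in>A - {m}. (if Ub A W c y j' then 1 else 0))) \<le> (\<Sum>y\<in>Sy. W (c m) y * (if Ub A W c y m then 0 else 1))"
          proof (rule sum_mono)
            fix y assume y: "y \<in> Sy"
            show "W (c m) y * (\<Sum>j'\<in>A - {m}. (if Ub A W c y j' then 1 else 0)) \<le> W (c m) y * (if Ub A W c y m then 0 else 1)"
              by (rule mult_left_mono[OF disj[OF finA mA]]) (use W0 cm y in auto)
          qed
          then show "Pc A Px c * (\<Sum>y\<in>Sy. W (c m) y * (\<Sum>j'\<in>A - {m}. (if Ub A W c y j' then 1 else 0))) \<le> Pc A Px c * (\<Sum>y\<in>Sy. W (c m) y * (if Ub A W c y m then 0 else 1))"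
            by (rule mult_left_mono) (rule Pc0[OF c])
        qed
        also have "\<dots> \<le> R" by (rule EB[OF mA])
        finally have "(real ?M - 1) * V m j \<le> R" using s1 by simp
        moreover have "real ?M - 1 > 0"
        proof -
          have "real (2::nat) \<le> real ?M" using M2 by (rule of_nat_mono)
          then show ?thesis by linarith
        qed
        ultimately show "V m j \<le> R / (real ?M - 1)" by (simp add: field_simps)
      qed
      have "(\<Sum>m'\<in>{1..?K} - {m}. V m m') \<le> (\<Sum>m'\<in>{1..?K} - {m}. R / (real ?M - 1))"
        using each sub by (intro sum_mono) auto
      also have "\<dots> = (real ?K - 1) * (R / (real ?M - 1))" using m by simp
      also have "\<dots> = ((real ?K - 1) / (real ?M - 1)) * R" by simp
      also have "\<dots> \<le> (real ?K / real ?M) * R"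
        by (rule mult_right_mono[OF frac_le R0]) (use KM M2 in auto)
      finally show ?thesis .
    qed
  qed
  have KMp: "real ?K / real ?M = 2 powr (- real \<Delta>)"
    by (simp add: power_add powr_minus powr_realpow divide_simps)
  have EUa: "(\<Sum>c\<in>C. Pc A Px c * EU c) \<le> R * 2 powr (- real \<Delta>)"
  proof -
    have "(\<Sum>c\<in>C. Pc A Px c * EU c) = (1 / ?K) * (\<Sum>m\<in>{1..?K}. \<Sum>m'\<in>{1..?K} - {m}. V m m')"
      unfolding EU_def V_def by (simp add: sum_distrib_left sum.swap[of _ C] algebra_simps)
    also have "\<dots> \<le> (1 / ?K) * (\<Sum>m\<in>{1..?K}. (real ?K / real ?M) * R)"
      using Vsum by (intro mult_left_mono sum_mono) auto
    also have "\<dots> = (real ?K / real ?M) * R" by simp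
    also have "\<dots> = R * 2 powr (- real \<Delta>)" unfolding KMp by (simp add: mult.commute)
    finally show ?thesis .
  qed
  obtain c1 c2 l where c1: "c1 \<in> C" and c2: "c2 \<in> C" and l: "0 \<le> l" "l \<le> 1"
    and bT: "l * ET c1 + (1 - l) * ET c2 \<le> R"
    and bU: "l * EU c1 + (1 - l) * EU c2 \<le> R * 2 powr (- real \<Delta>)"
    using mix2[OF finC Pc0 Ptot ETa EUa] by blast
  define pu where "pu u = (if u then l else 1 - l)" for u :: bool
  define enc where "enc u = (if u then c1 else c2)" for u :: bool
  define dec where "dec u = dcd A ?K W (enc u)" for u :: bool
  have encT: "\<And>c. c \<in> C \<Longrightarrow> (1 / ?K) * (\<Sum>m\<in>{1..?K}. \<Sum>m'\<in>{0..?K} - {m}. \<Sum>y\<in>{y\<in>words n. dcd A ?K W c y = m'}. W (c m) y) = ET c"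
  proof -
    fix c
    have "(\<Sum>m\<in>{1..?K}. \<Sum>m'\<in>{0..?K} - {m}. \<Sum>y\<in>{y\<in>words n. dcd A ?K W c y = m'}. W (c m) y)
       = (\<Sum>m\<in>{1..?K}. \<Sum>y\<in>words n. W (c m) y * (if Ub A W c y m then 0 else 1))"
      by (rule sum.cong[OF refl], rule code_T[OF _ sub finite_words])
    then show "(1 / ?K) * (\<Sum>m\<in>{1..?K}. \<Sum>m'\<in>{0..?K} - {m}. \<Sum>y\<in>{y\<in>words n. dcd A ?K W c y = m'}. W (c m) y) = ET c"
      unfolding ET_def Sy_def by simp
  qed
  have encU: "\<And>c. c \<in> C \<Longrightarrow> (1 / ?K) * (\<Sum>m\<in>{1..?K}. \<Sum>m'\<in>{1..?K} - {m}. \<Sum>y\<in>{y\<in>words n. dcd A ?K W c y = m'}. W (c m) y) = EU c"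
  proof -
    fix c
    have "(\<Sum>m\<in>{1..?K}. \<Sum>m'\<in>{1..?K} - {m}. \<Sum>y\<in>{y\<in>words n. dcd A ?K W c y = m'}. W (c m) y)
       = (\<Sum>m\<in>{1..?K}. \<Sum>m'\<in>{1..?K} - {m}. \<Sum>y\<in>words n. W (c m) y * (if Ub A W c y m' then 1 else 0))"
      by (rule sum.cong[OF refl], rule code_U[OF sub finite_words])
    then show "(1 / ?K) * (\<Sum>m\<in>{1..?K}. \<Sum>m'\<in>{1..?K} - {m}. \<Sum>y\<in>{y\<in>words n. dcd A ?K W c y = m'}. W (c m) y) = EU c"
      unfolding EU_def Sy_def by simp
  qed
  have code: "is_code n k W (l * ET c1 + (1 - l) * ET c2) (l * EU c1 + (1 - l) * EU c2)"
    unfolding is_code_def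
  proof (intro exI conjI)
    show "pmf_on UNIV pu" using l by (auto simp: pmf_on_def pu_def UNIV_bool)
    show "\<forall>u m. m \<in> {1..?K} \<longrightarrow> enc u m \<in> words n"
      using c1 c2 sub by (auto simp: enc_def C_def Sx_def PiE_def Pi_def)
    show "\<forall>u y. y \<in> words n \<longrightarrow> dec u y \<in> {0..?K}"
      using dcd_range by (auto simp: dec_def)
    show "1 / 2 ^ k * (\<Sum>m = 1..?K. \<Sum>m'\<in>{0..?K} - {m}. \<Sum>u\<in>UNIV. pu u * (\<Sum>y\<in>{y \<in> words n. dec u y = m'}. W (enc u m) y))
        \<le> l * ET c1 + (1 - l) * ET c2"
      unfolding pu_def mix_expr using encT[OF c1] encT[OF c2] by (simp add: dec_def enc_def)
    show "1 / 2 ^ k * (\<Sum>m = 1..?K. \<Sum>m'\<in>{1..?K} - {m}. \<Sum>u\<in>UNIV. pu u * (\<Sum>y\<in>{y \<in> words n. dec u y = m'}. W (enc u m) y))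
        \<le> l * EU c1 + (1 - l) * EU c2"
      unfolding pu_def mix_expr using encU[OF c1] encU[OF c2] by (simp add: dec_def enc_def)
  qed
  show ?thesis using code bT bU unfolding R_def by blast
qed


end
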